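(* Let $n\ge 2$ and $1\le k\le n-1$ be integers, $\lambda>0$, $s\ge 0$, and $t\in\{1,\dots,n\}$. Let $X_1,\dots,X_n$ be independent random variables each with the shifted-exponential distribution $\mathrm{Shifted\text{-}Exp}(\lambda,s)$, i.e. with CDF $F(y)=1-e^{-\lambda(y-s)}$ for $y\ge s$ and $F(y)=0$ for $y<s$. Let $$Y_{t,2}=\min\Big(X_t,\ \max\big(\mathrm{mink}(\{X_i\}_{i\neq t})\big)\Big),$$ where $\max(\mathrm{mink}(\{X_i\}_{i\neq t}))$ denotes the $k$-th smallest of the $n-1$ values $X_i$, $i\ne t$. Then $$E[Y_{t,2}]=s+\frac{k}{\lambda n}.$$
   Context: In an $(n,k,m)$ systematic MDS array code stored on $n$ nodes (any $k$ nodes recover all data), $X_i$ is the access latency of node $i$; $Y_{t,2}$ is the data access latency of the proposed accelerated access algorithms (AAKL/AAUL) for the data of node $t$: the minimum of directly reading node $t$ and reading the fastest $k$ nodes other than $t$ and decoding. *)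

theory Defs
  imports "HOL-Probability.Probability"
begin

definition shifted_exp_cdf :: "real \<Rightarrow> real \<Rightarrow> real \<Rightarrow> real" where
  "shifted_exp_cdf l s y = (if y < s then 0 else 1 - exp (- l * (y - s)))"

definition kth_smallest :: "nat \<Rightarrow> real list \<Rightarrow> real" where
  "kth_smallest k xs = sort xs ! (k - 1)"

definition Y_t2 :: "nat \<Rightarrow> nat \<Rightarrow> nat \<Rightarrow> (nat \<Rightarrow> 'a \<Rightarrow> real) \<Rightarrow> 'a \<Rightarrow> real" where
  "Y_t2 n k t X \<omega> =
     min (X t \<omega>) (kth_smallest k (map (\<lambda>i. X i \<omega>) (filter (\<lambda>i. i \<noteq> t) [1..<n+1])))"

end

theory Submission
  imports Defs
begin


definition Sm :: "nat \<Rightarrow> nat \<Rightarrow> real \<Rightarrow> real" where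
  "Sm n m u = (\<Sum>j\<le>m. real (n choose j) * (1 - u) ^ j * u ^ (n - j))"

lemma deriv_Sm:
  "m < n \<Longrightarrow> ((Sm n m) has_real_derivative
     (real n * real ((n - 1) choose m) * (1 - u) ^ m * u ^ (n - m - 1))) (at u)"
proof (induction m)
  case 0
  have "((\<lambda>u. u ^ n) has_real_derivative real n * u ^ (n - 1)) (at u)"
    by (rule derivative_eq_intros refl)+ simp
  then show ?case unfolding Sm_def  by simp
next
  case (Suc m)
  then have IH: "((Sm n m) has_real_derivative
     (real n * real ((n - 1) choose m) * (1 - u) ^ m * u ^ (n - m - 1))) (at u)" by simp
  define c where "c = real (n choose Suc m)"
  have eq: "Sm n (Suc m) = (\<lambda>u. Sm n m u + c * (1 - u) ^ Suc m * u ^ (n - Suc m))"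
    unfolding Sm_def c_def by (auto simp: fun_eq_iff)
  have d2: "((\<lambda>u. c * (1 - u) ^ Suc m * u ^ (n - Suc m)) has_real_derivative
      c * ((real (Suc m) * (1 - u) ^ m * (-1)) * u ^ (n - Suc m) +
           (1 - u) ^ Suc m * (real (n - Suc m) * u ^ (n - Suc m - 1)))) (at u)"
    by (rule derivative_eq_intros refl | simp)+ (simp add: algebra_simps)
  have a1: "real (Suc m) * c = real n * real ((n - 1) choose m)"
    unfolding c_def using binomial_absorption[of m n] by (simp only: of_nat_mult[symmetric])
  have a2: "real (n - Suc m) * c = real n * real ((n - 1) choose Suc m)"
    unfolding c_def using binomial_absorb_comp[of n "Suc m"] by (simp only: of_nat_mult[symmetric])
  have pw: "u ^ (n - m - 1) = u ^ (n - Suc m)" by simp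
  have EQ: "(real n * real ((n - 1) choose m) * (1 - u) ^ m * u ^ (n - m - 1)) +
      c * ((real (Suc m) * (1 - u) ^ m * (-1)) * u ^ (n - Suc m) +
           (1 - u) ^ Suc m * (real (n - Suc m) * u ^ (n - Suc m - 1)))
     = (real n * real ((n - 1) choose Suc m) * (1 - u) ^ Suc m * u ^ (n - Suc m - 1))"
  proof -
    define A where "A = (1 - u) ^ m"
    define B where "B = u ^ (n - Suc m - 1)"
    have p1: "u ^ (n - Suc m) = u * B" unfolding B_def using Suc.prems
      by (metis Suc_diff_Suc diff_Suc_1 diff_Suc_eq_diff_pred power_Suc)
    have p2: "(1 - u) ^ Suc m = (1 - u) * A" unfolding A_def by simp
    have "real n * real ((n - 1) choose m) * A * (u * B) +
      c * ((real (Suc m) * A * (-1)) * (u * B) + (1 - u) * A * (real (n - Suc m) * B))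
      = real n * real ((n - 1) choose Suc m) * ((1 - u) * A) * B"
    proof -
      have "c * ((real (Suc m) * A * (-1)) * (u * B) + (1 - u) * A * (real (n - Suc m) * B))
         = - ((real (Suc m) * c) * A * (u * B)) + (real (n - Suc m) * c) * ((1 - u) * A) * B"
        by (simp add: algebra_simps)
      then show ?thesis unfolding a1 a2 by simp
    qed
    then show ?thesis unfolding pw p1 p2 A_def[symmetric] B_def[symmetric] by simp
  qed
  have "((\<lambda>u. Sm n m u + c * (1 - u) ^ Suc m * u ^ (n - Suc m)) has_real_derivative
     (real n * real ((n - 1) choose Suc m) * (1 - u) ^ Suc m * u ^ (n - Suc m - 1))) (at u)"
    using DERIV_add[OF IH d2] unfolding EQ .
  then show ?case unfolding eq .
qed

definition Qf :: "nat \<Rightarrow> nat \<Rightarrow> real \<Rightarrow> real" where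
  "Qf n k u = (\<Sum>j<k. real ((n - 1) choose j) * (1 - u) ^ j * u ^ (n - j))"

lemma Sm_1: "Sm n m 1 = 1"
proof -
  have "Sm n m 1 = (\<Sum>j\<le>m. if j = 0 then 1 else 0)"
    unfolding Sm_def by (intro sum.cong) auto
  then show ?thesis by simp
qed

lemma Sm_0: "m < n \<Longrightarrow> Sm n m 0 = 0"
  unfolding Sm_def by (intro sum.neutral) auto

lemma Qf_nonneg: "0 \<le> u \<Longrightarrow> u \<le> 1 \<Longrightarrow> 0 \<le> Qf n k u"
  unfolding Qf_def by (intro sum_nonneg) auto

lemma aux_eq: "(U1::real) * u = U0 \<Longrightarrow> (N*C*A*U1)*(u*(-l)) = -(l*N)*(C*A*U0)"
  by (hypsubst) (simp add: algebra_simps)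

lemma integral_part:
  assumes l: "l > 0" and k: "k < n"
  shows "(\<integral>\<^sup>+ y. ennreal (Qf n k (exp (- l * (y - s)))) * indicator {s..} y \<partial>lborel)
       = ennreal (real k / (l * real n))"
proof -
  define F where "F y = - (\<Sum>m<k. Sm n m (exp (- l * (y - s)))) / (l * real n)" for y
  have n0: "real n > 0" using k by simp
  have "(\<integral>\<^sup>+ y. ennreal (Qf n k (exp (- l * (y - s)))) * indicator {s..} y \<partial>lborel)
       = ennreal (0 - F s)"
  proof (rule nn_integral_FTC_atLeast)
    show "(\<lambda>y. Qf n k (exp (- l * (y - s)))) \<in> borel_measurable borel"
      unfolding Qf_def by measurable
  next
    fix x assume "s \<le> x"
    then have "exp (- l * (x - s)) \<le> 1" using l by (simp add: mult_nonneg_nonneg)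
    then show "0 \<le> Qf n k (exp (- l * (x - s)))" by (intro Qf_nonneg) auto
  next
    fix x
    let ?u = "exp (- l * (x - s))"
    have dm: "((\<lambda>y. Sm n m (exp (- l * (y - s)))) has_real_derivative
        (real n * real ((n - 1) choose m) * (1 - ?u) ^ m * ?u ^ (n - m - 1)) * (?u * (- l))) (at x)"
      if "m < k" for m
    proof (rule DERIV_chain2[where f="Sm n m"])
      show "(Sm n m has_real_derivative real n * real ((n - 1) choose m) * (1 - ?u) ^ m * ?u ^ (n - m - 1)) (at ?u)"
        using deriv_Sm[of m n] that k by simp
      show "((\<lambda>y. exp (- l * (y - s))) has_real_derivative ?u * (- l)) (at x)"
        by (rule derivative_eq_intros refl | simp)+
    qed
    have eqm: "(real n * real ((n - 1) choose m) * (1 - ?u) ^ m * ?u ^ (n - m - 1)) * (?u * (- l))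
        = - (l * real n) * (real ((n - 1) choose m) * (1 - ?u) ^ m * ?u ^ (n - m))" if "m < k" for m
    proof -
      have "n - m = Suc (n - m - 1)" using that k by simp
      then have "?u ^ (n - m - 1) * ?u = ?u ^ (n - m)" by (metis power_Suc2)
      then show ?thesis by (rule aux_eq)
    qed
    have "((\<lambda>y. \<Sum>m<k. Sm n m (exp (- l * (y - s)))) has_real_derivative
        (\<Sum>m<k. - (l * real n) * (real ((n - 1) choose m) * (1 - ?u) ^ m * ?u ^ (n - m)))) (at x)"
    proof (rule DERIV_sum)
      fix m assume "m \<in> {..<k}"
      then have mk: "m < k" by simp
      show "((\<lambda>y. Sm n m (exp (- l * (y - s)))) has_real_derivative
        - (l * real n) * (real ((n - 1) choose m) * (1 - ?u) ^ m * ?u ^ (n - m))) (at x)"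
        using dm[OF mk] unfolding eqm[OF mk] .
    qed
    then have "((\<lambda>y. \<Sum>m<k. Sm n m (exp (- l * (y - s)))) has_real_derivative
        - (l * real n) * Qf n k ?u) (at x)"
      by (simp add: Qf_def sum_distrib_left)
    then have "(F has_real_derivative - (- (l * real n) * Qf n k ?u) / (l * real n)) (at x)"
      unfolding F_def by (rule DERIV_cdivide[OF DERIV_minus])
    then show "(F has_real_derivative Qf n k ?u) (at x)" using l n0 by simp
  next
    have f1: "filterlim (\<lambda>y. y - s) at_top at_top"
      using filterlim_tendsto_add_at_top[OF tendsto_const[of "-s"] filterlim_ident] by simp
    have "filterlim (\<lambda>y. l * (y - s)) at_top at_top"
      by (rule filterlim_tendsto_pos_mult_at_top[OF tendsto_const l f1])
    then have "filterlim (\<lambda>y. - l * (y - s)) at_bot at_top"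
      by (simp add: filterlim_uminus_at_bot)
    then have u0: "((\<lambda>y. exp (- l * (y - s))) \<longlongrightarrow> 0) at_top"
      by (rule filterlim_compose[OF exp_at_bot])
    have "((\<lambda>y. Sm n m (exp (- l * (y - s)))) \<longlongrightarrow> Sm n m 0) at_top" for m
      unfolding Sm_def by (intro tendsto_intros u0)
    then have "(F \<longlongrightarrow> - (\<Sum>m<k. Sm n m 0) / (l * real n)) at_top"
      unfolding F_def using l n0 by (intro tendsto_intros) auto
    then show "(F \<longlongrightarrow> 0) at_top" using k by (simp add: Sm_0)
  qed
  also have "0 - F s = real k / (l * real n)" unfolding F_def by (simp add: Sm_1)
  finally show ?thesis .
qed



lemma length_filter_sort: "length (filter P (sort xs)) = length (filter P xs)"
proof -
  have "mset (filter P (sort xs)) = mset (filter P xs)" by (simp add: mset_filter)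
  then show ?thesis by (metis size_mset)
qed

lemma kth_gt:
  assumes "1 \<le> k" "k \<le> length xs"
  shows "(y < kth_smallest k xs) \<longleftrightarrow> length (filter (\<lambda>x. x \<le> y) xs) < k"
proof -
  define ys where "ys = sort xs"
  have srt: "sorted ys" and len: "length ys = length xs" unfolding ys_def by auto
  have cnt: "length (filter (\<lambda>x. x \<le> y) xs) = card {j. j < length ys \<and> ys ! j \<le> y}"
  proof -
    have "length (filter (\<lambda>x. x \<le> y) xs) = length (filter (\<lambda>x. x \<le> y) ys)"
      unfolding ys_def by (rule length_filter_sort[symmetric])
    also have "\<dots> = card {j. j < length ys \<and> ys ! j \<le> y}" by (rule length_filter_conv_card)
    finally show ?thesis .
  qed
  show ?thesis
  proof
    assume gt: "y < kth_smallest k xs"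
    have "{j. j < length ys \<and> ys ! j \<le> y} \<subseteq> {..<k-1}"
    proof
      fix j assume j: "j \<in> {j. j < length ys \<and> ys ! j \<le> y}"
      show "j \<in> {..<k-1}"
      proof (rule ccontr)
        assume "j \<notin> {..<k-1}"
        then have "ys ! (k-1) \<le> ys ! j" using j by (intro sorted_nth_mono[OF srt]) auto
        then show False using gt j unfolding kth_smallest_def ys_def by auto
      qed
    qed
    then have "card {j. j < length ys \<and> ys ! j \<le> y} \<le> card {..<k-1}"
      by (rule card_mono[OF finite_lessThan])
    then have "card {j. j < length ys \<and> ys ! j \<le> y} \<le> k - 1" by simp
    then show "length (filter (\<lambda>x. x \<le> y) xs) < k" using cnt assms by linarith
  next
    assume lt: "length (filter (\<lambda>x. x \<le> y) xs) < k"
    show "y < kth_smallest k xs"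
    proof (rule ccontr)
      assume "\<not> y < kth_smallest k xs"
      then have le: "ys ! (k-1) \<le> y" unfolding kth_smallest_def ys_def by auto
      have "{..<k} \<subseteq> {j. j < length ys \<and> ys ! j \<le> y}"
      proof
        fix j assume "j \<in> {..<k}"
        then have "j \<le> k - 1" "k - 1 < length ys" using assms len by auto
        then have "ys ! j \<le> ys ! (k-1)" by (intro sorted_nth_mono[OF srt])
        then show "j \<in> {j. j < length ys \<and> ys ! j \<le> y}" using le \<open>j \<le> k - 1\<close> \<open>k - 1 < length ys\<close> by auto
      qed
      then have "k \<le> card {j. j < length ys \<and> ys ! j \<le> y}"
        using card_mono[of "{j. j < length ys \<and> ys ! j \<le> y}" "{..<k}"] by auto
      then show False using lt cnt by linarith
    qed
  qed
qed

lemma Y_gt: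
  assumes "t \<in> {1..n}" "1 \<le> k" "k \<le> n - 1"
  shows "(y < Y_t2 n k t X \<omega>) \<longleftrightarrow> y < X t \<omega> \<and> card {i \<in> {1..n} - {t}. X i \<omega> \<le> y} < k"
proof -
  define L where "L = filter (\<lambda>i. i \<noteq> t) [1..<n+1]"
  have setL: "set L = {1..n} - {t}" unfolding L_def by auto
  have dL: "distinct L" unfolding L_def by simp
  have lenL: "length L = n - 1"
    using distinct_card[OF dL] setL assms(1) by (simp add: card_Diff_singleton)
  have "length (filter (\<lambda>x. x \<le> y) (map (\<lambda>i. X i \<omega>) L)) = card {i \<in> {1..n} - {t}. X i \<omega> \<le> y}"
    unfolding filter_map length_map distinct_length_filter[OF dL] setL o_def
    by (rule arg_cong[where f=card]) auto
  moreover have "(y < kth_smallest k (map (\<lambda>i. X i \<omega>) L)) \<longleftrightarrow>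
      length (filter (\<lambda>x. x \<le> y) (map (\<lambda>i. X i \<omega>) L)) < k"
    using assms lenL by (intro kth_gt) auto
  ultimately show ?thesis unfolding Y_t2_def L_def[symmetric] by auto
qed

lemma sum_group_card:
  assumes "finite S"
  shows "(\<Sum>B\<in>{B. B \<subseteq> S \<and> card B < k}. g (card B)) = (\<Sum>j<k. real (card S choose j) * g j)"
proof -
  have eq: "{B. B \<subseteq> S \<and> card B < k} = (\<Union>j\<in>{..<k}. {B. B \<subseteq> S \<and> card B = j})" by auto
  have fin: "finite {B. B \<subseteq> S \<and> card B = j}" for j
    using assms by (rule rev_finite_subset[OF finite_Pow_iff[THEN iffD2]]) auto
  have "(\<Sum>B\<in>{B. B \<subseteq> S \<and> card B < k}. g (card B)) =
        (\<Sum>j<k. \<Sum>B\<in>{B. B \<subseteq> S \<and> card B = j}. g (card B))"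
    unfolding eq by (rule sum.UNION_disjoint) (auto simp: fin)
  also have "\<dots> = (\<Sum>j<k. real (card S choose j) * g j)"
  proof (rule sum.cong[OF refl])
    fix j
    have "(\<Sum>B\<in>{B. B \<subseteq> S \<and> card B = j}. g (card B)) = (\<Sum>B\<in>{B. B \<subseteq> S \<and> card B = j}. g j)"
      by (rule sum.cong) auto
    also have "\<dots> = real (card S choose j) * g j" using n_subsets[OF assms, of j] by simp
    finally show "(\<Sum>B\<in>{B. B \<subseteq> S \<and> card B = j}. g (card B)) = real (card S choose j) * g j" .
  qed
  finally show ?thesis .
qed



lemma prod_if_card:
  assumes "finite I" "B \<subseteq> I"
  shows "(\<Prod>i\<in>I. if i \<in> B then a else b) = (a::real) ^ card B * b ^ (card I - card B)"
proof -
  have "(\<Prod>i\<in>I. if i \<in> B then a else b) = (\<Prod>i\<in>I \<inter> {x. x \<in> B}. a) * (\<Prod>i\<in>I \<inter> - {x. x \<in> B}. b)"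
    by (rule prod.If_cases[OF assms(1)])
  also have "I \<inter> {x. x \<in> B} = B" using assms by auto
  also have "I \<inter> - {x. x \<in> B} = I - B" by auto
  finally have "(\<Prod>i\<in>I. if i \<in> B then a else b) = (\<Prod>i\<in>B. a) * (\<Prod>i\<in>I - B. b)" .
  moreover have "card (I - B) = card I - card B" using assms by (simp add: card_Diff_subset finite_subset)
  ultimately show ?thesis by simp
qed

lemma Qf_1: "1 \<le> k \<Longrightarrow> Qf n k 1 = 1"
proof -
  assume k: "1 \<le> k"
  have "Qf n k 1 = (\<Sum>j<k. if j = 0 then 1 else 0)"
    unfolding Qf_def by (intro sum.cong) auto
  then show ?thesis using k by simp
qed

theorem corollary6:
  fixes M :: "'a measure" and X :: "nat \<Rightarrow> 'a \<Rightarrow> real"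
    and n k t :: nat and l s :: real
  assumes "prob_space M"
    and "n \<ge> 2" and "1 \<le> k" and "k \<le> n - 1"
    and "l > 0" and "s \<ge> 0"
    and "t \<in> {1..n}"
    and "prob_space.indep_vars M (\<lambda>_. borel) X {1..n}"
    and "\<And>i y. i \<in> {1..n} \<Longrightarrow>
           measure M {\<omega> \<in> space M. X i \<omega> \<le> y} = shifted_exp_cdf l s y"
  shows "prob_space.expectation M (Y_t2 n k t X) = s + real k / (l * real n)"
proof -
  interpret P: prob_space M by fact
  note n2 = assms(2) and k1 = assms(3) and kn = assms(4) and l0 = assms(5) and s0 = assms(6)
    and tn = assms(7) and cdf = assms(9)
  define Y where "Y = Y_t2 n k t X"
  define F where "F = shifted_exp_cdf l s"
  define S where "S = {1..n} - {t}"
  define Sv where "Sv y = Qf n k (1 - F y)" for y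
  define C where "C y B i = (if i \<in> B then {..y} else {y<..})" for y :: real and B :: "nat set" and i :: nat
  define E where "E y B = (\<Inter>i\<in>{1..n}. X i -` C y B i \<inter> space M)" for y B
  define AA where "AA = {B. B \<subseteq> S \<and> card B < k}"
  have rv: "\<And>i. i \<in> {1..n} \<Longrightarrow> X i \<in> borel_measurable M"
    using assms(8) unfolding P.indep_vars_def2 by auto
  have ind: "P.indep_sets (\<lambda>i. {X i -` A \<inter> space M | A. A \<in> sets borel}) {1..n}"
    using assms(8) unfolding P.indep_vars_def2 by auto
  have ne: "{1..n} \<noteq> {}" using n2 by auto
  have Csets: "C y B i \<in> sets borel" for y B i unfolding C_def by auto
  have Xsets: "X i -` C y B i \<inter> space M \<in> sets M" if "i \<in> {1..n}" for y B i
    by (rule measurable_sets[OF rv[OF that] Csets])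
  have E_sets: "E y B \<in> sets M" for y B
    unfolding E_def using ne Xsets by (intro sets.finite_INT) auto
  have memE: "\<omega> \<in> E y B \<longleftrightarrow> \<omega> \<in> space M \<and> (\<forall>i\<in>{1..n}. X i \<omega> \<le> y \<longleftrightarrow> i \<in> B)" for \<omega> y B
    unfolding E_def C_def using ne by (auto simp: not_le)
  have Fle: "P.prob (X i -` {..y} \<inter> space M) = F y" if "i \<in> {1..n}" for i y
  proof -
    have "X i -` {..y} \<inter> space M = {\<omega> \<in> space M. X i \<omega> \<le> y}" by auto
    then show ?thesis using cdf[OF that] unfolding F_def by simp
  qed
  have Fgt: "P.prob (X i -` {y<..} \<inter> space M) = 1 - F y" if "i \<in> {1..n}" for i y
  proof -
    have "X i -` {y<..} \<inter> space M = space M - (X i -` {..y} \<inter> space M)" by auto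
    moreover have "X i -` {..y} \<inter> space M \<in> sets M" by (rule measurable_sets[OF rv[OF that]]) auto
    ultimately show ?thesis using P.prob_compl Fle[OF that] by simp
  qed
  have probE: "P.prob (E y B) = F y ^ card B * (1 - F y) ^ (n - card B)" if "B \<subseteq> {1..n}" for y B
  proof -
    have "P.prob (E y B) = (\<Prod>i\<in>{1..n}. P.prob (X i -` C y B i \<inter> space M))"
    proof -
      have "\<forall>j\<in>{1..n}. X j -` C y B j \<inter> space M \<in> {X j -` A \<inter> space M | A. A \<in> sets borel}"
        using Csets by blast
      then show ?thesis unfolding E_def using ne by (intro P.indep_setsD[OF ind]) auto
    qed
    also have "\<dots> = (\<Prod>i\<in>{1..n}. if i \<in> B then F y else 1 - F y)"
      by (intro prod.cong refl) (simp add: C_def Fle Fgt)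
    also have "\<dots> = F y ^ card B * (1 - F y) ^ (n - card B)"
      using prod_if_card[OF _ that] by simp
    finally show ?thesis .
  qed
  have Yset: "{\<omega> \<in> space M. y < Y \<omega>} = (\<Union>B\<in>AA. E y B)" for y
  proof (intro set_eqI iffI)
    fix \<omega> assume "\<omega> \<in> {\<omega> \<in> space M. y < Y \<omega>}"
    then have sp: "\<omega> \<in> space M" and gt: "y < X t \<omega>" and cd: "card {i \<in> S. X i \<omega> \<le> y} < k"
      using Y_gt[OF tn k1 kn, of y X \<omega>] unfolding Y_def S_def by auto
    have "{i \<in> S. X i \<omega> \<le> y} \<in> AA" unfolding AA_def using cd by auto
    moreover have "\<omega> \<in> E y {i \<in> S. X i \<omega> \<le> y}"
      unfolding memE using sp gt by (auto simp: S_def)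
    ultimately show "\<omega> \<in> (\<Union>B\<in>AA. E y B)" by blast
  next
    fix \<omega> assume "\<omega> \<in> (\<Union>B\<in>AA. E y B)"
    then obtain B where B: "B \<subseteq> S" "card B < k" "\<omega> \<in> E y B" unfolding AA_def by auto
    then have sp: "\<omega> \<in> space M" and iff: "\<forall>i\<in>{1..n}. X i \<omega> \<le> y \<longleftrightarrow> i \<in> B"
      unfolding memE by auto
    have "t \<notin> B" using B(1) unfolding S_def by auto
    then have gt: "y < X t \<omega>" using iff tn by force
    have "{i \<in> S. X i \<omega> \<le> y} = B" using iff B(1) unfolding S_def by auto
    then have "card {i \<in> S. X i \<omega> \<le> y} < k" using B(2) by simp
    then show "\<omega> \<in> {\<omega> \<in> space M. y < Y \<omega>}"
      using sp gt Y_gt[OF tn k1 kn, of y X \<omega>] unfolding Y_def S_def by auto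
  qed
  have finS: "finite S" unfolding S_def by auto
  have cardS: "card S = n - 1" unfolding S_def using tn by (simp add: card_Diff_singleton)
  have finAA: "finite AA" unfolding AA_def using finS
    by (rule rev_finite_subset[OF finite_Pow_iff[THEN iffD2]]) auto
  have AAsub: "B \<subseteq> {1..n}" if "B \<in> AA" for B using that unfolding AA_def S_def by auto
  have disj: "disjoint_family_on (E y) AA" for y
  proof (unfold disjoint_family_on_def, intro ballI impI)
    fix B1 B2 assume B: "B1 \<in> AA" "B2 \<in> AA" "B1 \<noteq> B2"
    show "E y B1 \<inter> E y B2 = {}"
    proof (rule ccontr)
      assume "E y B1 \<inter> E y B2 \<noteq> {}"
      then obtain \<omega> where "\<omega> \<in> E y B1" "\<omega> \<in> E y B2" by auto
      then have "\<forall>i\<in>{1..n}. i \<in> B1 \<longleftrightarrow> i \<in> B2" unfolding memE by auto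
      then have "B1 = B2" using AAsub[OF B(1)] AAsub[OF B(2)] by blast
      then show False using B(3) by simp
    qed
  qed
  have Ysets: "{\<omega> \<in> space M. y < Y \<omega>} \<in> sets M" for y
    unfolding Yset using finAA E_sets by (intro sets.finite_UN) auto
  have Ymeas: "Y \<in> borel_measurable M"
    unfolding borel_measurable_iff_greater using Ysets by auto
  have probY: "P.prob {\<omega> \<in> space M. y < Y \<omega>} = Sv y" for y
  proof -
    have "P.prob {\<omega> \<in> space M. y < Y \<omega>} = (\<Sum>B\<in>AA. P.prob (E y B))"
      unfolding Yset using finAA E_sets disj
      by (intro measure_finite_Union) (auto simp: P.emeasure_eq_measure)
    also have "\<dots> = (\<Sum>B\<in>AA. F y ^ card B * (1 - F y) ^ (n - card B))"
      by (intro sum.cong refl probE AAsub)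
    also have "\<dots> = (\<Sum>j<k. real (card S choose j) * (F y ^ j * (1 - F y) ^ (n - j)))"
      unfolding AA_def by (rule sum_group_card[OF finS])
    also have "\<dots> = Sv y" unfolding Sv_def Qf_def cardS by (simp add: mult.assoc)
    finally show ?thesis .
  qed
  have Sv_lt: "Sv y = 1" if "y < s" for y
    using that Qf_1[OF k1] unfolding Sv_def F_def shifted_exp_cdf_def by simp
  have Sv_ge: "Sv y = Qf n k (exp (- l * (y - s)))" if "s \<le> y" for y
    using that unfolding Sv_def F_def shifted_exp_cdf_def by simp
  have AEnn: "AE \<omega> in M. 0 \<le> Y \<omega>"
  proof -
    have "AE \<omega> in M. \<omega> \<in> {\<omega> \<in> space M. - inverse (real (Suc m)) < Y \<omega>}" for m
    proof (rule P.AE_prob_1)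
      have "- inverse (real (Suc m)) < s" using s0 by (smt (verit) inverse_positive_iff_positive of_nat_Suc of_nat_0_le_iff)
      then show "P.prob {\<omega> \<in> space M. - inverse (real (Suc m)) < Y \<omega>} = 1"
        using probY Sv_lt by simp
    qed
    then have "AE \<omega> in M. \<forall>m. - inverse (real (Suc m)) < Y \<omega>"
      unfolding AE_all_countable by auto
    then show ?thesis
    proof (rule AE_mp, intro AE_I2 impI)
      fix \<omega> assume H: "\<forall>m. - inverse (real (Suc m)) < Y \<omega>"
      show "0 \<le> Y \<omega>"
      proof (rule ccontr)
        assume "\<not> 0 \<le> Y \<omega>"
        then have "0 < - Y \<omega>" by simp
        then obtain m where "inverse (real (Suc m)) < - Y \<omega>" using reals_Archimedean by blast
        then show False using H[rule_format, of m] by linarith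
      qed
    qed
  qed
  have nn: "(\<integral>\<^sup>+ \<omega>. ennreal (Y \<omega>) \<partial>M) = ennreal (s + real k / (l * real n))"
  proof -
    interpret PS: pair_sigma_finite M lborel
      by (simp add: pair_sigma_finite_def P.sigma_finite_measure_axioms lborel.sigma_finite_measure_axioms)
    have ind_int: "(\<integral>\<^sup>+ y. (if 0 \<le> y \<and> y < a then 1 else 0) \<partial>lborel) = ennreal a" for a :: real
    proof -
      have "(\<integral>\<^sup>+ y. (if 0 \<le> y \<and> y < a then 1 else 0) \<partial>lborel) = (\<integral>\<^sup>+ y. indicator {0..<a} y \<partial>lborel)"
        by (intro nn_integral_cong) (auto simp: indicator_def)
      also have "\<dots> = emeasure lborel {0..<a}" by (rule nn_integral_indicator) simp
      also have "\<dots> = ennreal a"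
      proof (cases "0 \<le> a")
        case True then show ?thesis by simp
      next
        case False then show ?thesis by (simp add: ennreal_neg)
      qed
      finally show ?thesis .
    qed
    have inner: "(\<integral>\<^sup>+ \<omega>. (if 0 \<le> y \<and> y < Y \<omega> then 1 else 0) \<partial>M) = ennreal (Sv y) * indicator {0..} y" for y
    proof (cases "0 \<le> y")
      case True
      have "(\<integral>\<^sup>+ \<omega>. (if 0 \<le> y \<and> y < Y \<omega> then 1 else 0) \<partial>M) = (\<integral>\<^sup>+ \<omega>. indicator {\<omega> \<in> space M. y < Y \<omega>} \<omega> \<partial>M)"
        using True by (intro nn_integral_cong) (auto simp: indicator_def)
      also have "\<dots> = emeasure M {\<omega> \<in> space M. y < Y \<omega>}" by (rule nn_integral_indicator[OF Ysets])
      also have "\<dots> = ennreal (Sv y)" using probY[of y] by (simp add: P.emeasure_eq_measure)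
      finally show ?thesis using True by simp
    next
      case False then show ?thesis by simp
    qed
    have "(\<integral>\<^sup>+ \<omega>. ennreal (Y \<omega>) \<partial>M) = (\<integral>\<^sup>+ \<omega>. (\<integral>\<^sup>+ y. (if 0 \<le> y \<and> y < Y \<omega> then 1 else 0) \<partial>lborel) \<partial>M)"
      by (simp only: ind_int)
    also have "\<dots> = (\<integral>\<^sup>+ y. (\<integral>\<^sup>+ \<omega>. (if 0 \<le> y \<and> y < Y \<omega> then 1 else 0) \<partial>M) \<partial>lborel)"
    proof (rule PS.Fubini'[symmetric])
      show "(\<lambda>(\<omega>, y). if 0 \<le> y \<and> y < Y \<omega> then 1 else 0 :: ennreal) \<in> borel_measurable (M \<Otimes>\<^sub>M lborel)"
        using Ymeas by measurable
    qed
    also have "\<dots> = (\<integral>\<^sup>+ y. ennreal (Sv y) * indicator {0..} y \<partial>lborel)"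
      by (simp only: inner)
    also have "\<dots> = (\<integral>\<^sup>+ y. indicator {0..<s} y + ennreal (Qf n k (exp (- l * (y - s)))) * indicator {s..} y \<partial>lborel)"
    proof (intro nn_integral_cong)
      fix y :: real
      show "ennreal (Sv y) * indicator {0..} y = indicator {0..<s} y + ennreal (Qf n k (exp (- l * (y - s)))) * indicator {s..} y"
      proof (cases "y < s")
        case True then show ?thesis using Sv_lt[OF True] by (simp add: indicator_def)
      next
        case False then show ?thesis using Sv_ge[of y] s0 by (simp add: indicator_def)
      qed
    qed
    also have "\<dots> = (\<integral>\<^sup>+ y. indicator {0..<s} y \<partial>lborel) + (\<integral>\<^sup>+ y. ennreal (Qf n k (exp (- l * (y - s)))) * indicator {s..} y \<partial>lborel)"
      by (rule nn_integral_add) (auto simp: Qf_def)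
    also have "\<dots> = ennreal s + ennreal (real k / (l * real n))"
      using integral_part[OF l0, of k n s] kn n2 s0 by simp
    also have "\<dots> = ennreal (s + real k / (l * real n))"
      using s0 l0 by (simp add: ennreal_plus)
    finally show ?thesis .
  qed
  have "P.expectation Y = enn2real (\<integral>\<^sup>+ \<omega>. ennreal (Y \<omega>) \<partial>M)"
    by (rule integral_eq_nn_integral[OF Ymeas AEnn])
  also have "\<dots> = s + real k / (l * real n)" unfolding nn
    by (intro enn2real_ennreal add_nonneg_nonneg divide_nonneg_nonneg mult_nonneg_nonneg) (use s0 l0 in auto)
  finally show ?thesis unfolding Y_def .
qed

end
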